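(* Let $\operatorname{Hi}(z)=\pi^{-1}\int_0^\infty e^{-t^3/3+zt}\,\mathrm dt$ for $z\in\mathbb C$. For all $\theta\in[\pi/2,3\pi/2]$, $x\in\mathbb R$ and $y\ge0$, \[ \big|\operatorname{Hi}(x+e^{\mathrm i\theta}y)\big|\le\operatorname{Hi}(x). \] *)

theory Defs
  imports "HOL-Analysis.Analysis"
begin

definition Hi :: "complex \<Rightarrow> complex" where
  "Hi z = (LINT t:{0..}|lborel. exp (- (complex_of_real t ^ 3) / 3 + z * complex_of_real t)) / complex_of_real pi"

end

theory Submission
  imports Defs
begin

lemma poly_bound:
  fixes x t :: real
  assumes t: "0 \<le> t"
  shows "-(t^3)/3 + x*t \<le> (\<bar>x\<bar>+1)*(3*(\<bar>x\<bar>+1)+1) - t"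
proof -
  define a where "a = \<bar>x\<bar>+1"
  define b where "b = 3*a+1"
  have a1: "a \<ge> 1" unfolding a_def by simp
  have "(x+1)*t \<le> a*t" unfolding a_def using t by (intro mult_right_mono) auto
  moreover have "a*t - t^3/3 \<le> a*b"
  proof (cases "t \<le> b")
    case True
    have "a*t \<le> a*b" using True a1 by (intro mult_left_mono) auto
    moreover have "t^3 \<ge> 0" using t by simp
    ultimately show ?thesis by linarith
  next
    case False
    have "t*t \<ge> b*b" using False a1 b_def by (intro mult_mono) auto
    moreover have "b*1 \<le> b*b" using a1 b_def by (intro mult_left_mono) auto
    moreover have "b \<ge> 3*a" using b_def by simp
    ultimately have "t*t \<ge> 3*a" by linarith
    hence "t*(t*t) \<ge> t*(3*a)" using t by (intro mult_left_mono) auto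
    moreover have "a*b \<ge> 0" using a1 b_def by simp
    ultimately show ?thesis by (simp add: power3_eq_cube algebra_simps)
  qed
  ultimately show ?thesis unfolding a_def[symmetric] b_def[symmetric] by (simp add: algebra_simps)
qed

lemma g_integrable:
  fixes x :: real
  shows "integrable lborel (\<lambda>t. indicator {0..} t *\<^sub>R exp (-(t^3)/3 + x*t))"
proof -
  define C where "C = (\<bar>x\<bar>+1)*(3*(\<bar>x\<bar>+1)+1)"
  have "(\<lambda>t. exp C * exp (-1*t)) integrable_on {0..}"
    using integrable_on_cmult_left[OF integrable_on_exp_minus_to_infinity[of 1 0], of "exp C"] by simp
  hence "(\<lambda>t. exp C * exp (-1*t)) absolutely_integrable_on {0..}"
    by (intro nonnegative_absolutely_integrable_1) auto
  hence "integrable lebesgue (\<lambda>t. indicator {0..} t *\<^sub>R (exp C * exp (-1*t)))"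
    unfolding set_integrable_def .
  hence "integrable lebesgue (\<lambda>t. indicator {0..} t *\<^sub>R exp (-(t^3)/3 + x*t))"
  proof (rule Bochner_Integration.integrable_bound [OF _ _ AE_I2])
    show "(\<lambda>t. indicat_real {0..} t *\<^sub>R exp (-(t^3)/3 + x*t)) \<in> borel_measurable lebesgue"
      by (intro measurable_completion)
         (auto intro!: borel_measurable_continuous_on_indicator continuous_intros)
    fix t :: real
    show "norm (indicat_real {0..} t *\<^sub>R exp (-(t^3)/3 + x*t))
        \<le> norm (indicat_real {0..} t *\<^sub>R (exp C * exp (-1*t)))"
    proof (cases "t \<ge> 0")
      case True
      have h: "-(t^3)/3 + x*t \<le> C + -1*t"
        using poly_bound[OF True, of x] unfolding C_def by simp
      have "exp (-(t^3)/3 + x*t) \<le> exp (C + -1*t)"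
        using h by (simp only: exp_le_cancel_iff)
      also have "\<dots> = exp C * exp (-1*t)" by (rule exp_add)
      finally show ?thesis using True by simp
    qed (simp add: indicator_def)
  qed
  thus ?thesis
    by (subst (asm) integrable_completion)
       (auto intro!: borel_measurable_continuous_on_indicator continuous_intros)
qed

theorem lemma3p3:
  fixes \<theta> x y :: real
  assumes "pi / 2 \<le> \<theta>" and "\<theta> \<le> 3 * pi / 2" and "0 \<le> y"
  shows "cmod (Hi (complex_of_real x + cis \<theta> * complex_of_real y)) \<le> Re (Hi (complex_of_real x))"
proof -
  define z where "z = complex_of_real x + cis \<theta> * complex_of_real y"
  define g where "g = (\<lambda>t::real. exp (-(t^3)/3 + x*t))"
  have "0 \<le> cos (\<theta> - pi)"
    using assms(1,2) by (intro cos_ge_zero) auto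
  hence cos: "cos \<theta> \<le> 0" by simp
  have hx: "Hi (complex_of_real x) = complex_of_real ((LINT t:{0..}|lborel. g t) / pi)"
  proof -
    have A: "(\<lambda>t. exp (- (complex_of_real t ^ 3) / 3 + complex_of_real x * complex_of_real t))
        = (\<lambda>t. complex_of_real (g t))"
      unfolding g_def by (rule ext) (simp add: exp_of_real[symmetric])
    have B: "(\<lambda>t. indicator {0..} t *\<^sub>R complex_of_real (g t))
       = (\<lambda>t. complex_of_real (indicator {0..} t *\<^sub>R g t))"
      by (auto simp: indicator_def)
    show ?thesis unfolding Hi_def A set_lebesgue_integral_def B
      by (simp only: integral_complex_of_real of_real_divide)
  qed
  have nb: "norm (indicator {0..} t *\<^sub>R exp (- (complex_of_real t ^ 3) / 3 + z * complex_of_real t))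
      \<le> indicator {0..} t *\<^sub>R g t" for t :: real
  proof (cases "t \<ge> 0")
    case True
    have "Re (- (complex_of_real t ^ 3) / 3 + z * complex_of_real t) = -(t^3)/3 + x*t + y*cos \<theta>*t"
      unfolding z_def by (simp add: cis.sel algebra_simps)
    moreover have "y*cos \<theta>*t \<le> 0"
      using True cos assms(3) by (simp add: mult_nonneg_nonpos mult_nonpos_nonneg)
    ultimately have "Re (- (complex_of_real t ^ 3) / 3 + z * complex_of_real t) \<le> -(t^3)/3 + x*t"
      by linarith
    thus ?thesis using True unfolding g_def by (simp add: norm_exp_eq_Re)
  qed (simp add: indicator_def)
  have "cmod (LINT t:{0..}|lborel. exp (- (complex_of_real t ^ 3) / 3 + z * complex_of_real t))
      \<le> (LINT t:{0..}|lborel. g t)"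
    unfolding set_lebesgue_integral_def
  proof (rule order_trans[OF integral_norm_bound])
    show "(\<integral>t. norm (indicator {0..} t *\<^sub>R exp (- (complex_of_real t ^ 3) / 3 + z * complex_of_real t)) \<partial>lborel)
        \<le> (\<integral>t. indicator {0..} t *\<^sub>R g t \<partial>lborel)"
      by (rule integral_mono') (use nb g_integrable[of x] in \<open>auto simp: g_def indicator_def\<close>)
  qed
  hence "cmod (Hi z) \<le> (LINT t:{0..}|lborel. g t) / pi"
    unfolding Hi_def by (simp add: norm_divide divide_right_mono)
  thus ?thesis unfolding hx z_def[symmetric] by simp
qed

end
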